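(* Let $H$ be a separable complex Hilbert space, $(\Omega,\mu)$ a measure space with positive measure, let $K\in B(H)$ have closed range, let $F:\Omega\to H$ be a Parseval continuous $K$-frame of $H$, and let $\tilde F(\omega)=K^{\dagger}F(\omega)$ be its canonical dual continuous $K$-Bessel sequence. Then: (1) $\tilde F$ is a Parseval continuous frame for the Hilbert space $(\mathcal{N}(K))^{\perp}$, i.e. $\int_\Omega|\langle f,\tilde F(\omega)\rangle|^2\,d\mu(\omega)=\|f\|^2$ for all $f\in(\mathcal{N}(K))^{\perp}$; (2) $\tilde F$ is a Parseval continuous $K^{\dagger}K$-frame of $H$, i.e. $\int_\Omega|\langle f,\tilde F(\omega)\rangle|^2\,d\mu(\omega)=\|(K^{\dagger}K)^{\ast}f\|^2$ for all $f\in H$; and $K\tilde F$ (i.e. $\omega\mapsto KK^{\dagger}F(\omega)$) is a Parseval continuous $K$-frame of $H$.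
   Context: $\mathcal{N}(K)$ is the null space of $K$. A map $F:\Omega\to H$ is weakly measurable if $\omega\mapsto\langle f,F(\omega)\rangle$ is measurable for every $f\in H$. For $L\in B(H)$, a Parseval continuous $L$-frame is a weakly measurable $F$ with $\int_\Omega|\langle f,F(\omega)\rangle|^2\,d\mu(\omega)=\|L^{\ast}f\|^2$ for all $f\in H$. $K^{\dagger}$ denotes the Moore–Penrose pseudo-inverse of the closed-range operator $K$. The canonical dual continuous $K$-Bessel sequence of a Parseval continuous $K$-frame $F$ is $K^{\dagger}F$; it satisfies $Kf=\int_\Omega\langle f,K^\dagger F(\omega)\rangle F(\omega)\,d\mu(\omega)$ for all $f\in H$. *)

theory Defs
  imports "HOL-Analysis.Analysis" "HOL-Probability.Probability"
begin

class complex_vector = real_vector +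
  fixes scaleC :: "complex \<Rightarrow> 'a \<Rightarrow> 'a" (infixr \<open>*\<^sub>C\<close> 75)
  assumes scaleC_add_right: "a *\<^sub>C (x + y) = a *\<^sub>C x + a *\<^sub>C y"
    and scaleC_add_left: "(a + b) *\<^sub>C x = a *\<^sub>C x + b *\<^sub>C x"
    and scaleC_scaleC: "a *\<^sub>C (b *\<^sub>C x) = (a * b) *\<^sub>C x"
    and scaleC_one: "1 *\<^sub>C x = x"
    and scaleR_scaleC: "scaleR r x = complex_of_real r *\<^sub>C x"

text \<open>Complex inner product, linear in the first argument, conjugate linear in the second.\<close>
class complex_inner = complex_vector + real_normed_vector +
  fixes cinner :: "'a \<Rightarrow> 'a \<Rightarrow> complex"
  assumes cinner_commute: "cinner x y = cnj (cinner y x)"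
    and cinner_add_left: "cinner (x + y) z = cinner x z + cinner y z"
    and cinner_scaleC_left: "cinner (r *\<^sub>C x) y = r * cinner x y"
    and cinner_ge_zero: "0 \<le> Re (cinner x x)"
    and cinner_eq_zero_iff: "cinner x x = 0 \<longleftrightarrow> x = 0"
    and norm_eq_sqrt_cinner: "norm x = sqrt (Re (cinner x x))"

class chilbert_space = complex_inner + complete_space

definition separable_space :: "'a::topological_space itself \<Rightarrow> bool" where
  "separable_space _ \<longleftrightarrow> (\<exists>D::'a set. countable D \<and> closure D = UNIV)"

definition bounded_clinear :: "('a::complex_inner \<Rightarrow> 'b::complex_inner) \<Rightarrow> bool" where
  "bounded_clinear K \<longleftrightarrow> bounded_linear K \<and> (\<forall>c x. K (c *\<^sub>C x) = c *\<^sub>C K x)"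

definition null_space :: "('a \<Rightarrow> 'b::zero) \<Rightarrow> 'a set" where
  "null_space K = {x. K x = 0}"

definition orth_compl :: "'a::complex_inner set \<Rightarrow> 'a set" where
  "orth_compl S = {x. \<forall>y\<in>S. cinner x y = 0}"

definition adjoint :: "('a::complex_inner \<Rightarrow> 'b::complex_inner) \<Rightarrow> 'b \<Rightarrow> 'a" where
  "adjoint K = (THE A. \<forall>x y. cinner (K x) y = cinner x (A y))"

definition pseudo_inverse :: "('a::complex_inner \<Rightarrow> 'b::complex_inner) \<Rightarrow> 'b \<Rightarrow> 'a" where
  "pseudo_inverse K = (THE A. bounded_clinear A \<and> K \<circ> A \<circ> K = K \<and> A \<circ> K \<circ> A = A
      \<and> adjoint (K \<circ> A) = K \<circ> A \<and> adjoint (A \<circ> K) = A \<circ> K)"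

definition weakly_measurable :: "'b measure \<Rightarrow> ('b \<Rightarrow> 'a::complex_inner) \<Rightarrow> bool" where
  "weakly_measurable M F \<longleftrightarrow> (\<forall>f. (\<lambda>\<omega>. cinner f (F \<omega>)) \<in> borel_measurable M)"

definition parseval_cont_L_frame ::
  "'b measure \<Rightarrow> ('a::complex_inner \<Rightarrow> 'a) \<Rightarrow> ('b \<Rightarrow> 'a) \<Rightarrow> bool" where
  "parseval_cont_L_frame M L F \<longleftrightarrow> weakly_measurable M F \<and>
     (\<forall>f. (\<integral>\<^sup>+\<omega>. ennreal ((cmod (cinner f (F \<omega>)))\<^sup>2) \<partial>M) = ennreal ((norm (adjoint L f))\<^sup>2))"

definition parseval_cont_frame_on ::
  "'b measure \<Rightarrow> 'a::complex_inner set \<Rightarrow> ('b \<Rightarrow> 'a) \<Rightarrow> bool" where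
  "parseval_cont_frame_on M V F \<longleftrightarrow> (\<forall>\<omega>. F \<omega> \<in> V) \<and>
     (\<forall>f\<in>V. (\<lambda>\<omega>. cinner f (F \<omega>)) \<in> borel_measurable M) \<and>
     (\<forall>f\<in>V. (\<integral>\<^sup>+\<omega>. ennreal ((cmod (cinner f (F \<omega>)))\<^sup>2) \<partial>M) = ennreal ((norm f)\<^sup>2))"

end

theory Submission
  imports Defs
begin
lemma scaleC_zero_left[simp]: "(0::complex) *\<^sub>C (x::'a::complex_vector) = 0"
  by (metis scaleR_scaleC scaleR_zero_left of_real_0)
lemma scaleC_zero_right[simp]: "c *\<^sub>C (0::'a::complex_vector) = 0"
  by (metis add_cancel_right_right scaleC_add_right add_0)
lemma scaleC_minus_left: "(- c) *\<^sub>C (x::'a::complex_vector) = - (c *\<^sub>C x)"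
  by (metis add_eq_0_iff scaleC_add_left scaleC_zero_left neg_eq_iff_add_eq_0 add.right_inverse)
lemma scaleC_minus_right: "c *\<^sub>C (- x::'a::complex_vector) = - (c *\<^sub>C x)"
  by (metis add_eq_0_iff scaleC_add_right scaleC_zero_right add.right_inverse)
lemma scaleC_diff_right: "c *\<^sub>C (x - y::'a::complex_vector) = c *\<^sub>C x - c *\<^sub>C y"
  by (metis diff_conv_add_uminus scaleC_add_right scaleC_minus_right)
lemma scaleC_diff_left: "(c - d) *\<^sub>C (x::'a::complex_vector) = c *\<^sub>C x - d *\<^sub>C x"
  by (metis diff_conv_add_uminus scaleC_add_left scaleC_minus_left)

lemma cinner_zero_left[simp]: "cinner 0 (y::'a::complex_inner) = 0"
  by (metis add_cancel_right_right cinner_add_left add_0)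
lemma cinner_zero_right[simp]: "cinner (y::'a::complex_inner) 0 = 0"
  by (metis cinner_commute cinner_zero_left complex_cnj_zero)
lemma cinner_add_right: "cinner (x::'a::complex_inner) (y + z) = cinner x y + cinner x z"
  by (metis cinner_commute cinner_add_left complex_cnj_add)
lemma cinner_scaleC_right: "cinner (x::'a::complex_inner) (r *\<^sub>C y) = cnj r * cinner x y"
  by (metis cinner_commute cinner_scaleC_left complex_cnj_mult)
lemma cinner_minus_left: "cinner (- x) (y::'a::complex_inner) = - cinner x y"
  by (metis add_eq_0_iff cinner_add_left cinner_zero_left add.right_inverse)
lemma cinner_minus_right: "cinner x (- y::'a::complex_inner) = - cinner x y"
  by (metis add_eq_0_iff cinner_add_right cinner_zero_right add.right_inverse)
lemma cinner_diff_left: "cinner (x - y) (z::'a::complex_inner) = cinner x z - cinner y z"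
  by (metis diff_conv_add_uminus cinner_add_left cinner_minus_left)
lemma cinner_diff_right: "cinner x (y - z::'a::complex_inner) = cinner x y - cinner x z"
  by (metis diff_conv_add_uminus cinner_add_right cinner_minus_right)
lemma cinner_scaleR_left: "cinner (scaleR r x) (y::'a::complex_inner) = complex_of_real r * cinner x y"
  by (simp add: scaleR_scaleC cinner_scaleC_left)
lemma cinner_scaleR_right: "cinner x (scaleR r y::'a::complex_inner) = complex_of_real r * cinner x y"
  by (simp add: scaleR_scaleC cinner_scaleC_right)

lemma cinner_self_Im: "Im (cinner x (x::'a::complex_inner)) = 0"
proof -
  have "cinner x x = cnj (cinner x x)" by (rule cinner_commute)
  then have "Im (cinner x x) = Im (cnj (cinner x x))" by simp
  then show ?thesis by simp
qed
lemma norm_sq_Re: "(norm (x::'a::complex_inner))^2 = Re (cinner x x)"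
  by (simp add: norm_eq_sqrt_cinner cinner_ge_zero)
lemma cinner_self: "cinner x (x::'a::complex_inner) = complex_of_real ((norm x)^2)"
  by (simp add: norm_sq_Re complex_eq_iff cinner_self_Im)

lemma cinner_eq_zero_all: "(\<And>y. cinner x (y::'a::complex_inner) = 0) \<Longrightarrow> x = 0"
  using cinner_eq_zero_iff by blast
lemma cinner_ext: "(\<And>y. cinner x y = cinner (z::'a::complex_inner) y) \<Longrightarrow> x = z"
proof -
  assume "\<And>y. cinner x y = cinner z y"
  then have "\<And>y. cinner (x - z) y = 0" by (simp add: cinner_diff_left)
  then have "x - z = 0" by (rule cinner_eq_zero_all)
  then show "x = z" by simp
qed
lemma cinner_ext_right: "(\<And>y. cinner y x = cinner y (z::'a::complex_inner)) \<Longrightarrow> x = z"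
  by (metis cinner_commute cinner_ext)

lemma norm_sq_add: "(norm (a + b::'a::complex_inner))^2 = (norm a)^2 + (norm b)^2 + 2 * Re (cinner a b)"
proof -
  have "Re (cinner b a) = Re (cinner a b)" by (metis complex_cnj_cnj cnj.sel(1) cinner_commute)
  then show ?thesis by (simp add: norm_sq_Re cinner_add_left cinner_add_right)
qed
lemma norm_sq_diff: "(norm (a - b::'a::complex_inner))^2 = (norm a)^2 + (norm b)^2 - 2 * Re (cinner a b)"
  using norm_sq_add[of a "-b"] by (simp add: cinner_minus_right)
lemma pythagoras: "cinner a b = 0 \<Longrightarrow> (norm (a + b::'a::complex_inner))^2 = (norm a)^2 + (norm b)^2"
  by (simp add: norm_sq_add)

lemma norm_scaleC: "norm (c *\<^sub>C (x::'a::complex_inner)) = cmod c * norm x"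
proof -
  have "cinner (c *\<^sub>C x) (c *\<^sub>C x) = (c * cnj c) * cinner x x"
    by (simp add: cinner_scaleC_left cinner_scaleC_right mult.assoc)
  also have "\<dots> = complex_of_real ((cmod c)^2) * complex_of_real ((norm x)^2)"
    by (metis cinner_self complex_norm_square)
  also have "\<dots> = complex_of_real ((cmod c * norm x)^2)"
    by (simp add: power_mult_distrib)
  finally have "(norm (c *\<^sub>C x))^2 = (cmod c * norm x)^2" by (simp add: norm_sq_Re)
  then show ?thesis by (simp add: power2_eq_iff_nonneg)
qed

lemma cauchy_schwarz: "cmod (cinner x (y::'a::complex_inner)) \<le> norm x * norm y"
proof (cases "y = 0")
  case True then show ?thesis by simp
next
  case False
  define l where "l = cinner x y / complex_of_real ((norm y)^2)"
  define w where "w = x - l *\<^sub>C y"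
  have ny: "norm y \<noteq> 0" using False by simp
  have "cinner w y = cinner x y - l * complex_of_real ((norm y)^2)"
    by (simp add: w_def cinner_diff_left cinner_scaleC_left cinner_self)
  then have wy: "cinner w y = 0" using ny by (simp add: l_def)
  have "x = w + l *\<^sub>C y" by (simp add: w_def)
  then have "(norm x)^2 = (norm w)^2 + (norm (l *\<^sub>C y))^2"
    using pythagoras[of w "l *\<^sub>C y"] wy by (simp add: cinner_scaleC_right)
  then have "(norm x)^2 \<ge> (cmod l * norm y)^2" by (simp add: norm_scaleC)
  moreover have "cmod l * norm y = cmod (cinner x y) / norm y"
    using ny by (simp add: l_def norm_divide norm_power power2_eq_square norm_mult)
  ultimately have "(cmod (cinner x y) / norm y)^2 \<le> (norm x)^2" by simp
  then have "cmod (cinner x y) / norm y \<le> norm x"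
    using power2_le_imp_le by fastforce
  then show ?thesis using ny by (simp add: divide_le_eq mult.commute)
qed

definition csubspace :: "'a::complex_vector set \<Rightarrow> bool" where
  "csubspace V \<longleftrightarrow> 0 \<in> V \<and> (\<forall>x\<in>V. \<forall>y\<in>V. x + y \<in> V) \<and> (\<forall>c. \<forall>x\<in>V. c *\<^sub>C x \<in> V)"

lemma csubspace_0: "csubspace V \<Longrightarrow> 0 \<in> V" by (simp add: csubspace_def)
lemma csubspace_add: "csubspace V \<Longrightarrow> x \<in> V \<Longrightarrow> y \<in> V \<Longrightarrow> x + y \<in> V" by (simp add: csubspace_def)
lemma csubspace_scaleC: "csubspace V \<Longrightarrow> x \<in> V \<Longrightarrow> c *\<^sub>C x \<in> V" by (simp add: csubspace_def)
lemma csubspace_scaleR: "csubspace V \<Longrightarrow> x \<in> V \<Longrightarrow> r *\<^sub>R x \<in> V" by (simp add: csubspace_def scaleR_scaleC)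
lemma csubspace_minus: "csubspace V \<Longrightarrow> x \<in> V \<Longrightarrow> - x \<in> V"
  using csubspace_scaleR[of V x "-1"] by simp
lemma csubspace_diff: "csubspace V \<Longrightarrow> x \<in> V \<Longrightarrow> y \<in> V \<Longrightarrow> x - y \<in> V"
  by (metis csubspace_add csubspace_minus diff_conv_add_uminus)

lemma parallelogram: "(norm (a + b::'a::complex_inner))^2 + (norm (a - b))^2 = 2 * (norm a)^2 + 2 * (norm b)^2"
  by (simp add: norm_sq_add norm_sq_diff)

lemma proj_exists:
  fixes V :: "'a::chilbert_space set"
  assumes sub: "csubspace V" and cl: "closed V"
  shows "\<exists>p\<in>V. \<forall>v\<in>V. cinner (x - p) v = 0"
proof -
  define D where "D = (\<lambda>v. norm (x - v)) ` V"
  define d where "d = Inf D"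
  have D0: "D \<noteq> {}" using csubspace_0[OF sub] by (auto simp: D_def)
  have bdd: "bdd_below D" unfolding D_def by (rule bdd_belowI[of _ 0]) auto
  have lower: "d \<le> norm (x - v)" if "v \<in> V" for v
    unfolding d_def using bdd that by (auto simp: D_def intro: cInf_lower)
  have d0: "0 \<le> d" unfolding d_def by (rule cInf_greatest[OF D0]) (auto simp: D_def)
  have "\<exists>v\<in>V. norm (x - v) < d + inverse (real (Suc n))" for n
  proof -
    have "Inf D < d + inverse (real (Suc n))" by (simp add: d_def)
    then obtain t where "t \<in> D" "t < d + inverse (real (Suc n))" using cInf_lessD[OF D0] by blast
    then show ?thesis by (auto simp: D_def)
  qed
  then obtain s where sV: "\<And>n. s n \<in> V" and sd: "\<And>n. norm (x - s n) < d + inverse (real (Suc n))"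
    by metis
  have key: "(norm (v - w))^2 \<le> 2 * (norm (x - v))^2 + 2 * (norm (x - w))^2 - 4 * d^2"
    if "v \<in> V" "w \<in> V" for v w
  proof -
    define m where "m = (1/2) *\<^sub>R (v + w)"
    have mV: "m \<in> V" unfolding m_def by (intro csubspace_scaleR csubspace_add sub that)
    have "d^2 \<le> (norm (x - m))^2" using lower[OF mV] d0 by (simp add: power_mono)
    moreover have "(x - v) + (x - w) = 2 *\<^sub>R (x - m)" by (simp add: m_def algebra_simps scaleR_2)
    moreover have "(x - v) - (x - w) = w - v" by simp
    ultimately show ?thesis using parallelogram[of "x - v" "x - w"] norm_minus_commute[of v w]
      by (simp add: power_mult_distrib)
  qed
  have sq: "(norm (x - s n))^2 \<le> d^2 + (2*d+1) * inverse (real (Suc n))" for n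
  proof -
    have "(norm (x - s n))^2 \<le> (d + inverse (real (Suc n)))^2"
      using sd[of n] by (intro power_mono) auto
    also have "\<dots> = d^2 + (2*d + inverse (real (Suc n))) * inverse (real (Suc n))"
      by (simp add: power2_eq_square algebra_simps)
    also have "\<dots> \<le> d^2 + (2*d+1) * inverse (real (Suc n))"
      by (intro add_left_mono mult_right_mono) (auto simp: inverse_le_1_iff)
    finally show ?thesis .
  qed
  have "Cauchy s"
  proof (rule CauchyI)
    fix e :: real assume e: "0 < e"
    obtain N0 :: nat where N0: "4 * (2*d+1) / e^2 < real N0"
      using reals_Archimedean2 by blast
    define N where "N = N0"
    have N: "4 * (2*d+1) / e^2 < real (Suc N)" using N0 by (simp add: N_def)
    have Ninv: "4 * (2*d+1) * inverse (real (Suc N)) < e^2"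
      using N e by (simp add: field_simps)
    show "\<exists>M. \<forall>m\<ge>M. \<forall>n\<ge>M. norm (s m - s n) < e"
    proof (intro exI allI impI)
      fix m n assume mn: "N \<le> m" "N \<le> n"
      have c0: "0 \<le> 2*(2*d+1)" using d0 by simp
      have im: "inverse (real (Suc m)) \<le> inverse (real (Suc N))"
        using mn by (intro le_imp_inverse_le) auto
      have inn: "inverse (real (Suc n)) \<le> inverse (real (Suc N))"
        using mn by (intro le_imp_inverse_le) auto
      have "(norm (s m - s n))^2 \<le> 2 * (norm (x - s m))^2 + 2 * (norm (x - s n))^2 - 4 * d^2"
        using key sV by blast
      also have "\<dots> \<le> 2 * (2*d+1) * inverse (real (Suc m)) + 2 * (2*d+1) * inverse (real (Suc n))"
        using sq[of m] sq[of n] by linarith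
      also have "\<dots> \<le> 4 * (2*d+1) * inverse (real (Suc N))"
        using mult_left_mono[OF im c0] mult_left_mono[OF inn c0] by linarith
      also have "\<dots> < e^2" by (rule Ninv)
      finally show "norm (s m - s n) < e"
        using e by (meson abs_norm_cancel order_less_le power2_less_imp_less)
    qed
  qed
  then obtain p where sp: "s \<longlonglongrightarrow> p" using Cauchy_convergent_iff convergent_def by blast
  have pV: "p \<in> V" using closed_sequentially[OF cl sV sp] .
  have "norm (x - p) \<le> d"
  proof (rule LIMSEQ_le)
    show "(\<lambda>n. norm (x - s n)) \<longlonglongrightarrow> norm (x - p)" by (intro tendsto_intros sp)
    show "(\<lambda>n. d + inverse (real (Suc n))) \<longlonglongrightarrow> d" by (rule LIMSEQ_inverse_real_of_nat_add)
    show "\<exists>N. \<forall>n\<ge>N. norm (x - s n) \<le> d + inverse (real (Suc n))" using sd less_imp_le by blast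
  qed
  then have mini: "norm (x - p) \<le> norm (x - v)" if "v \<in> V" for v using lower[OF that] by simp
  define u where "u = x - p"
  have re0: "Re (cinner u v) = 0" if vV: "v \<in> V" for v
  proof (cases "v = 0")
    case True then show ?thesis by simp
  next
    case False
    define a where "a = Re (cinner u v)"
    define t where "t = a / (norm v)^2"
    have nv: "norm v > 0" using False by simp
    have ptv: "p + t *\<^sub>R v \<in> V" by (intro csubspace_add csubspace_scaleR sub pV vV)
    have "x - (p + t *\<^sub>R v) = u - t *\<^sub>R v" by (simp add: u_def)
    have "norm (x - p) \<le> norm (x - (p + t *\<^sub>R v))" by (rule mini[OF ptv])
    then have "norm u \<le> norm (u - t *\<^sub>R v)" by (simp add: u_def diff_diff_eq)
    then have "(norm u)^2 \<le> (norm (u - t *\<^sub>R v))^2" by (simp add: power_mono)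
    also have "\<dots> = (norm u)^2 + t^2 * (norm v)^2 - 2 * t * a"
      by (simp add: norm_sq_diff cinner_scaleR_right a_def power_mult_distrib)
    finally have "2 * t * a \<le> t^2 * (norm v)^2" by simp
    then have "2 * a^2 / (norm v)^2 \<le> a^2 / (norm v)^2"
      using nv by (simp add: t_def power2_eq_square field_simps)
    then have "a^2 \<le> 0" using nv by (simp add: divide_le_cancel)
    then show ?thesis by (simp add: a_def)
  qed
  have "cinner u v = 0" if vV: "v \<in> V" for v
  proof -
    have "Re (cinner u (\<i> *\<^sub>C v)) = 0" by (intro re0 csubspace_scaleC sub vV)
    then have "Im (cinner u v) = 0" by (simp add: cinner_scaleC_right)
    with re0[OF vV] show ?thesis by (simp add: complex_eq_iff)
  qed
  then show ?thesis using pV unfolding u_def by blast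
qed

definition proj :: "'a::complex_inner set \<Rightarrow> 'a \<Rightarrow> 'a" where
  "proj V x = (THE p. p \<in> V \<and> (\<forall>v\<in>V. cinner (x - p) v = 0))"

lemma proj_uniq:
  fixes V :: "'a::complex_inner set"
  assumes sub: "csubspace V" and "p \<in> V" "\<forall>v\<in>V. cinner (x - p) v = 0"
    and "q \<in> V" "\<forall>v\<in>V. cinner (x - q) v = 0"
  shows "p = q"
proof -
  have pq: "p - q \<in> V" using assms csubspace_diff by blast
  have "cinner (x - q) (p - q) - cinner (x - p) (p - q) = 0" using assms pq by simp
  then have "cinner (p - q) (p - q) = 0" by (simp add: cinner_diff_left)
  then show ?thesis by (metis cinner_eq_zero_iff eq_iff_diff_eq_0)
qed

context
  fixes V :: "'a::chilbert_space set"
  assumes sub: "csubspace V" and cl: "closed V"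
begin

lemma proj_prop: "proj V x \<in> V \<and> (\<forall>v\<in>V. cinner (x - proj V x) v = 0)"
proof -
  obtain p where p: "p \<in> V \<and> (\<forall>v\<in>V. cinner (x - p) v = 0)" using proj_exists[OF sub cl] by blast
  show ?thesis unfolding proj_def
    by (rule theI[of _ p]) (use p proj_uniq[OF sub] in blast)+
qed

lemma proj_in: "proj V x \<in> V" using proj_prop by blast
lemma proj_orth: "v \<in> V \<Longrightarrow> cinner (x - proj V x) v = 0" using proj_prop by blast
lemma proj_eqI: "p \<in> V \<Longrightarrow> (\<And>v. v \<in> V \<Longrightarrow> cinner (x - p) v = 0) \<Longrightarrow> proj V x = p"
  using proj_uniq[OF sub] proj_prop by blast
lemma proj_id: "v \<in> V \<Longrightarrow> proj V v = v"
  by (rule proj_eqI) auto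
lemma proj_add: "proj V (x + y) = proj V x + proj V y"
proof (rule proj_eqI)
  show "proj V x + proj V y \<in> V" by (intro csubspace_add sub proj_in)
  fix v assume v: "v \<in> V"
  have eq: "x + y - (proj V x + proj V y) = (x - proj V x) + (y - proj V y)" by simp
  have "cinner (x - proj V x) v = 0" "cinner (y - proj V y) v = 0" using proj_orth[OF v] by auto
  then show "cinner (x + y - (proj V x + proj V y)) v = 0" unfolding eq cinner_add_left by simp
qed
end

context
  fixes V :: "'a::chilbert_space set"
  assumes sub: "csubspace V" and cl: "closed V"
begin
lemma proj_scaleC: "proj V (c *\<^sub>C x) = c *\<^sub>C proj V x"
proof (rule proj_eqI[OF sub cl])
  show "c *\<^sub>C proj V x \<in> V" by (intro csubspace_scaleC sub proj_in[OF sub cl])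
  fix v assume v: "v \<in> V"
  have "c *\<^sub>C x - c *\<^sub>C proj V x = c *\<^sub>C (x - proj V x)" by (simp add: scaleC_diff_right)
  then show "cinner (c *\<^sub>C x - c *\<^sub>C proj V x) v = 0"
    using proj_orth[OF sub cl v] by (simp add: cinner_scaleC_left)
qed

lemma proj_orth': "v \<in> V \<Longrightarrow> cinner v (x - proj V x) = 0"
proof -
  assume v: "v \<in> V"
  have "cinner (x - proj V x) v = 0" by (rule proj_orth[OF sub cl v])
  then show ?thesis by (subst cinner_commute) simp
qed

lemma proj_sa: "cinner (proj V x) y = cinner x (proj V y)"
proof -
  have a: "cinner (proj V x) (y - proj V y) = 0" by (rule proj_orth'[OF proj_in[OF sub cl]])
  have b: "cinner (x - proj V x) (proj V y) = 0" by (rule proj_orth[OF sub cl proj_in[OF sub cl]])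
  from a b show ?thesis by (simp add: cinner_diff_left cinner_diff_right)
qed

lemma proj_norm: "norm (proj V x) \<le> norm x"
proof -
  have "cinner (proj V x) (x - proj V x) = 0" by (rule proj_orth'[OF proj_in[OF sub cl]])
  then have "(norm (proj V x + (x - proj V x)))^2 = (norm (proj V x))^2 + (norm (x - proj V x))^2"
    by (rule pythagoras)
  then have "(norm (proj V x))^2 \<le> (norm x)^2" by simp
  then show ?thesis by (rule power2_le_imp_le) simp
qed

lemma proj_idem: "proj V (proj V x) = proj V x"
  by (rule proj_id[OF sub cl proj_in[OF sub cl]])
end

lemma bcl_linear: "bounded_clinear K \<Longrightarrow> linear K" by (simp add: bounded_clinear_def bounded_linear.linear)
lemma bcl_add: "bounded_clinear K \<Longrightarrow> K (x + y) = K x + K y" by (simp add: bcl_linear linear_add)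
lemma bcl_diff: "bounded_clinear K \<Longrightarrow> K (x - y) = K x - K y" by (simp add: bcl_linear linear_diff)
lemma bcl_zero: "bounded_clinear K \<Longrightarrow> K 0 = 0" by (simp add: bcl_linear linear_0)
lemma bcl_scaleC: "bounded_clinear K \<Longrightarrow> K (c *\<^sub>C x) = c *\<^sub>C K x" by (simp add: bounded_clinear_def)
lemma bcl_bl: "bounded_clinear K \<Longrightarrow> bounded_linear K" by (simp add: bounded_clinear_def)
lemma bcl_bound: "bounded_clinear K \<Longrightarrow> \<exists>B. \<forall>x. norm (K x) \<le> norm x * B"
  by (simp add: bounded_clinear_def bounded_linear.bounded)
lemma bcl_comp: "bounded_clinear A \<Longrightarrow> bounded_clinear B \<Longrightarrow> bounded_clinear (A \<circ> B)"
  unfolding bounded_clinear_def comp_def by (auto intro: bounded_linear_compose)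

lemma clinear_bounded_linear:
  fixes f :: "'a::complex_inner \<Rightarrow> 'b::complex_inner"
  assumes "\<And>x y. f (x + y) = f x + f y" "\<And>c x. f (c *\<^sub>C x) = c *\<^sub>C f x" "\<And>x. norm (f x) \<le> norm x * B"
  shows "bounded_clinear f"
  unfolding bounded_clinear_def
  using assms by (auto intro!: bounded_linear_intro[where K=B] simp: scaleR_scaleC)

lemma riesz:
  fixes \<phi> :: "'a::chilbert_space \<Rightarrow> complex"
  assumes add: "\<And>x y. \<phi> (x + y) = \<phi> x + \<phi> y" and sc: "\<And>c x. \<phi> (c *\<^sub>C x) = c * \<phi> x"
    and bd: "\<And>x. cmod (\<phi> x) \<le> norm x * B"
  shows "\<exists>z. \<forall>x. \<phi> x = cinner x z"
proof -
  have bl: "bounded_linear \<phi>"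
    by (rule bounded_linear_intro[where K=B]) (auto simp: add scaleR_scaleC sc scaleR_conv_of_real bd)
  define N where "N = {x. \<phi> x = 0}"
  have z0: "\<phi> 0 = 0" using sc[of 0 0] by simp
  have subN: "csubspace N" unfolding csubspace_def N_def using z0 by (simp add: add sc)
  have clN: "closed N" unfolding N_def
    by (rule closed_Collect_eq) (auto intro: linear_continuous_on bl)
  show ?thesis
  proof (cases "\<forall>x. \<phi> x = 0")
    case True then show ?thesis by (intro exI[of _ 0]) simp
  next
    case False
    then obtain x0 where x0: "\<phi> x0 \<noteq> 0" by blast
    define u where "u = x0 - proj N x0"
    have pN: "proj N x0 \<in> N" by (rule proj_in[OF subN clN])
    have phiu: "\<phi> u = \<phi> x0"
    proof -
      have "x0 = u + proj N x0" by (simp add: u_def)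
      then have "\<phi> x0 = \<phi> u + \<phi> (proj N x0)" using add[of u "proj N x0"] by simp
      then show ?thesis using pN by (simp add: N_def)
    qed
    have uorth: "cinner v u = 0" if "v \<in> N" for v
      unfolding u_def by (rule proj_orth'[OF subN clN that])
    have u0: "u \<noteq> 0" using phiu x0 z0 by auto
    have uu: "cinner u u \<noteq> 0" using u0 cinner_eq_zero_iff by auto
    define z where "z = cnj (\<phi> u / cinner u u) *\<^sub>C u"
    have "\<phi> x = cinner x z" for x
    proof -
      define w where "w = \<phi> x *\<^sub>C u - \<phi> u *\<^sub>C x"
      have "w = \<phi> x *\<^sub>C u + (- \<phi> u) *\<^sub>C x" by (simp add: w_def scaleC_minus_left)
      then have "\<phi> w = \<phi> x * \<phi> u + (- \<phi> u) * \<phi> x" by (simp add: add sc)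
      then have "w \<in> N" by (simp add: N_def)
      then have "cinner w u = 0" by (rule uorth)
      then have "\<phi> x * cinner u u - \<phi> u * cinner x u = 0"
        by (simp add: w_def cinner_diff_left cinner_scaleC_left)
      then have "\<phi> x = \<phi> u * cinner x u / cinner u u" using uu by (simp add: field_simps)
      then show ?thesis by (simp add: z_def cinner_scaleC_right)
    qed
    then show ?thesis by blast
  qed
qed

lemma adjoint_exists:
  fixes T :: "'a::chilbert_space \<Rightarrow> 'b::complex_inner"
  assumes T: "bounded_clinear T"
  shows "\<exists>S. \<forall>x y. cinner (T x) y = cinner x (S y)"
proof -
  obtain B where B: "\<And>x. norm (T x) \<le> norm x * B" using bcl_bound[OF T] by blast
  have "\<exists>z. \<forall>x. cinner (T x) y = cinner x z" for y
  proof (rule riesz)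
    show "cinner (T (x + x')) y = cinner (T x) y + cinner (T x') y" for x x'
      by (simp add: bcl_add[OF T] cinner_add_left)
    show "cinner (T (c *\<^sub>C x)) y = c * cinner (T x) y" for c x
      by (simp add: bcl_scaleC[OF T] cinner_scaleC_left)
    show "cmod (cinner (T x) y) \<le> norm x * (B * norm y)" for x
    proof -
      have "cmod (cinner (T x) y) \<le> norm (T x) * norm y" by (rule cauchy_schwarz)
      also have "\<dots> \<le> norm x * B * norm y" by (intro mult_right_mono B) auto
      finally show ?thesis by (simp add: mult.assoc)
    qed
  qed
  then have "\<forall>y. \<exists>z. \<forall>x. cinner (T x) y = cinner x z" by blast
  from choice[OF this] show ?thesis by blast
qed

lemma adjoint_eqI:
  assumes "\<And>x y. cinner (T x) y = cinner x (S y)"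
  shows "adjoint T = S"
  unfolding adjoint_def
proof (rule the_equality)
  show "\<forall>x y. cinner (T x) y = cinner x (S y)" using assms by blast
  fix A assume A: "\<forall>x y. cinner (T x) y = cinner x (A y)"
  show "A = S"
  proof
    fix y
    have "cinner x (A y) = cinner x (S y)" for x using A assms by simp
    then show "A y = S y" by (rule cinner_ext_right)
  qed
qed

lemma adjoint_prop:
  fixes T :: "'a::chilbert_space \<Rightarrow> 'b::complex_inner"
  assumes "bounded_clinear T"
  shows "cinner (T x) y = cinner x (adjoint T y)"
proof -
  obtain S where S: "\<forall>x y. cinner (T x) y = cinner x (S y)" using adjoint_exists[OF assms] by blast
  then have "adjoint T = S" by (intro adjoint_eqI) auto
  then show ?thesis using S by simp
qed

lemma adjoint_prop':
  fixes T :: "'a::chilbert_space \<Rightarrow> 'b::complex_inner"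
  assumes "bounded_clinear T"
  shows "cinner y (T x) = cinner (adjoint T y) x"
  using adjoint_prop[OF assms, of x y] cinner_commute[of y "T x"] cinner_commute[of "adjoint T y" x] by simp

subclass (in chilbert_space) banach ..

lemma bcl_scaleR: "bounded_clinear K \<Longrightarrow> K (r *\<^sub>R x) = r *\<^sub>R K x"
  by (simp add: scaleR_scaleC bcl_scaleC)

lemma range_csubspace:
  assumes K: "bounded_clinear K" shows "csubspace (range K)"
  unfolding csubspace_def
proof (intro conjI ballI allI)
  show "0 \<in> range K" using bcl_zero[OF K] by (metis rangeI)
  fix x y assume "x \<in> range K" "y \<in> range K"
  then obtain a b where "x = K a" "y = K b" by blast
  then show "x + y \<in> range K" using bcl_add[OF K, of a b] by (metis rangeI)
next
  fix c x assume "x \<in> range K"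
  then obtain a where "x = K a" by blast
  then show "c *\<^sub>C x \<in> range K" using bcl_scaleC[OF K, of c a] by (metis rangeI)
qed

lemma open_mapping_step1:
  fixes K :: "'a::chilbert_space \<Rightarrow> 'b::chilbert_space"
  assumes K: "bounded_clinear K" and cl: "closed (range K)"
  shows "\<exists>n::nat. \<exists>y0 \<in> range K. \<exists>e>0. range K \<inter> ball y0 e \<subseteq> closure (K ` cball 0 (real n))"
proof -
  define R where "R = range K"
  define G where "G = range (\<lambda>n::nat. R \<inter> closure (K ` cball 0 (real n)))"
  have cms: "completely_metrizable_space (top_of_set R)"
    unfolding R_def by (rule completely_metrizable_space_closedin[OF completely_metrizable_space_euclidean closed_closedin[THEN iffD1, OF cl]])
  have UG: "\<Union>G = R"
  proof
    show "\<Union>G \<subseteq> R" by (auto simp: G_def)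
    show "R \<subseteq> \<Union>G"
    proof
      fix y assume "y \<in> R"
      then obtain x where y: "y = K x" by (auto simp: R_def)
      obtain n :: nat where n: "norm x \<le> real n" using real_arch_simple by blast
      have "y \<in> K ` cball 0 (real n)" unfolding y using n by (intro imageI) simp
      then have "y \<in> R \<inter> closure (K ` cball 0 (real n))" using \<open>y \<in> R\<close> closure_subset[of "K ` cball 0 (real n)"] by blast
      then show "y \<in> \<Union>G" unfolding G_def by blast
    qed
  qed
  have "\<exists>T\<in>G. top_of_set R interior_of T \<noteq> {}"
  proof (rule ccontr)
    assume neg: "\<not> ?thesis"
    have clT: "closedin (top_of_set R) T" if "T \<in> G" for T
    proof -
      obtain m :: nat where "T = R \<inter> closure (K ` cball 0 (real m))" using \<open>T \<in> G\<close> unfolding G_def by blast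
      then show ?thesis unfolding closedin_closed by (intro exI[of _ "closure (K ` cball 0 (real m))"]) simp
    qed
    have nint: "top_of_set R interior_of T = {}" if "T \<in> G" for T
      using that neg by blast
    have "top_of_set R interior_of \<Union>G = {}"
    proof (rule Baire_category_alt)
      show "completely_metrizable_space (top_of_set R) \<or> locally_compact_space (top_of_set R) \<and> regular_space (top_of_set R)"
        using cms by (rule disjI1)
      show "countable G" by (simp add: G_def)
      show "closedin (top_of_set R) T \<and> top_of_set R interior_of T = {}" if "T \<in> G" for T
        using clT[OF that] nint[OF that] by (rule conjI)
    qed
    moreover have "top_of_set R interior_of \<Union>G = R" using UG interior_of_topspace[of "top_of_set R"] by simp
    moreover have "0 \<in> R" using bcl_zero[OF K] unfolding R_def by (metis rangeI)
    ultimately show False by blast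
  qed
  then obtain n :: nat where "top_of_set R interior_of (R \<inter> closure (K ` cball 0 (real n))) \<noteq> {}"
    by (auto simp: G_def)
  then obtain y0 U where U: "openin (top_of_set R) U" "y0 \<in> U" "U \<subseteq> R \<inter> closure (K ` cball 0 (real n))"
    by (auto simp: interior_of_def)
  then obtain W where W: "open W" "U = R \<inter> W" by (auto simp: openin_open)
  have "y0 \<in> W" using U(2) W(2) by blast
  then obtain e where e: "e > 0" "ball y0 e \<subseteq> W" using open_contains_ball_eq[OF W(1)] by blast
  have "R \<inter> ball y0 e \<subseteq> closure (K ` cball 0 (real n))" using W e U by blast
  moreover have "y0 \<in> R" using U W by blast
  ultimately show ?thesis using e unfolding R_def by blast
qed

lemma open_mapping_step2:
  fixes K :: "'a::chilbert_space \<Rightarrow> 'b::chilbert_space"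
  assumes K: "bounded_clinear K" and cl: "closed (range K)"
  shows "\<exists>M\<ge>0. \<forall>y\<in>range K. \<exists>x. norm x \<le> M * norm y \<and> norm (y - K x) \<le> norm y / 2"
proof -
  obtain n :: nat and y0 e where y0: "y0 \<in> range K" and e: "e > 0"
    and sub: "range K \<inter> ball y0 e \<subseteq> closure (K ` cball 0 (real n))"
    using open_mapping_step1[OF K cl] by blast
  have y0c: "y0 \<in> closure (K ` cball 0 (real n))" using sub y0 e by auto
  have approx: "\<exists>x. norm x \<le> 2 * real n \<and> norm (K x - y) < d"
    if y: "y \<in> range K" "norm y < e" and d: "d > 0" for y d
  proof -
    have "y0 + y \<in> range K" using y0 y range_csubspace[OF K] csubspace_add by blast
    moreover have "y0 + y \<in> ball y0 e" using y by (simp add: dist_norm)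
    ultimately have "y0 + y \<in> closure (K ` cball 0 (real n))" using sub by blast
    then obtain z1 where "z1 \<in> K ` cball 0 (real n)" "dist z1 (y0 + y) < d/2"
      using d unfolding closure_approachable by (meson half_gt_zero)
    then obtain x1 where x1: "norm x1 \<le> real n" "dist (K x1) (y0 + y) < d/2" by auto
    obtain z2 where "z2 \<in> K ` cball 0 (real n)" "dist z2 y0 < d/2"
      using d y0c unfolding closure_approachable by (meson half_gt_zero)
    then obtain x2 where x2: "norm x2 \<le> real n" "dist (K x2) y0 < d/2" by auto
    have "norm (x1 - x2) \<le> 2 * real n" using x1(1) x2(1) norm_triangle_ineq4[of x1 x2] by linarith
    moreover have "K (x1 - x2) - y = (K x1 - (y0 + y)) - (K x2 - y0)" by (simp add: bcl_diff[OF K])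
    then have "norm (K (x1 - x2) - y) \<le> norm (K x1 - (y0 + y)) + norm (K x2 - y0)"
      by (simp only: norm_triangle_ineq4)
    then have "norm (K (x1 - x2) - y) < d" using x1(2) x2(2) by (simp add: dist_norm)
    ultimately show ?thesis by blast
  qed
  define M where "M = 4 * real n / e"
  have M0: "M \<ge> 0" using e by (simp add: M_def)
  have "\<exists>x. norm x \<le> M * norm y \<and> norm (y - K x) \<le> norm y / 2" if y: "y \<in> range K" for y
  proof (cases "y = 0")
    case True then show ?thesis by (intro exI[of _ 0]) (simp add: bcl_zero[OF K])
  next
    case False
    then have ny: "norm y > 0" by simp
    define s where "s = e / (2 * norm y)"
    have s0: "s > 0" using e ny by (simp add: s_def)
    have "s *\<^sub>R y \<in> range K" using y range_csubspace[OF K] csubspace_scaleR by blast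
    moreover have "norm (s *\<^sub>R y) < e" using s0 ny e by (simp add: s_def)
    ultimately obtain x' where x': "norm x' \<le> 2 * real n" "norm (K x' - s *\<^sub>R y) < e / 4"
      using approx[of "s *\<^sub>R y" "e/4"] e by auto
    define x where "x = (1/s) *\<^sub>R x'"
    have "norm x = norm x' / s" using s0 by (simp add: x_def)
    also have "\<dots> \<le> 2 * real n / s" using x'(1) s0 by (simp add: divide_right_mono)
    also have "\<dots> = M * norm y" using e ny by (simp add: s_def M_def field_simps)
    finally have nx: "norm x \<le> M * norm y" .
    have "y - K x = (1/s) *\<^sub>R (s *\<^sub>R y - K x')" using s0 by (simp add: x_def bcl_scaleR[OF K] algebra_simps)
    then have "norm (y - K x) = norm (K x' - s *\<^sub>R y) / s" using s0 by (simp add: norm_minus_commute)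
    also have "\<dots> \<le> (e / 4) / s" by (intro divide_right_mono) (use x'(2) s0 in auto)
    also have "\<dots> = norm y / 2"
    proof -
      have "s * (norm y / 2) = e / 4" using ny by (simp add: s_def)
      then show ?thesis using s0 by (metis nonzero_mult_div_cancel_left less_irrefl)
    qed
    finally show ?thesis using nx by blast
  qed
  then show ?thesis using M0 by blast
qed

lemma open_mapping:
  fixes K :: "'a::chilbert_space \<Rightarrow> 'b::chilbert_space"
  assumes K: "bounded_clinear K" and cl: "closed (range K)"
  shows "\<exists>C\<ge>0. \<forall>y\<in>range K. \<exists>x. K x = y \<and> norm x \<le> C * norm y"
proof -
  obtain M where M0: "M \<ge> 0" and M: "\<And>y. y \<in> range K \<Longrightarrow> \<exists>x. norm x \<le> M * norm y \<and> norm (y - K x) \<le> norm y / 2"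
    using open_mapping_step2[OF K cl] by blast
  define g where "g y = (SOME x. norm x \<le> M * norm y \<and> norm (y - K x) \<le> norm y / 2)" for y
  have g: "norm (g y) \<le> M * norm y \<and> norm (y - K (g y)) \<le> norm y / 2" if "y \<in> range K" for y
    unfolding g_def by (rule someI_ex[OF M[OF that]])
  have "\<exists>x. K x = y \<and> norm x \<le> (2 * M) * norm y" if y: "y \<in> range K" for y
  proof -
    define ys where "ys = rec_nat y (\<lambda>_ z. z - K (g z))"
    have ys0: "ys 0 = y" by (simp add: ys_def)
    have ysS: "ys (Suc k) = ys k - K (g (ys k))" for k by (simp add: ys_def)
    have ysR: "ys k \<in> range K \<and> norm (ys k) \<le> norm y * (1/2)^k" for k
    proof (induction k)
      case 0 then show ?case using y by (simp add: ys0)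
    next
      case (Suc k)
      then have "ys k \<in> range K" by blast
      have "ys (Suc k) \<in> range K" unfolding ysS
        using \<open>ys k \<in> range K\<close> range_csubspace[OF K] csubspace_diff by blast
      moreover have "norm (ys (Suc k)) \<le> norm (ys k) / 2" unfolding ysS using g[OF \<open>ys k \<in> range K\<close>] by blast
      ultimately show ?case using Suc by auto
    qed
    define xs where "xs k = g (ys k)" for k
    have nxs: "norm (xs k) \<le> M * norm y * (1/2)^k" for k
    proof -
      have "norm (xs k) \<le> M * norm (ys k)" using g ysR by (simp add: xs_def)
      also have "\<dots> \<le> M * (norm y * (1/2)^k)" using ysR M0 by (intro mult_left_mono) auto
      finally show ?thesis by (simp add: mult.assoc)
    qed
    have sg: "summable (\<lambda>k. M * norm y * (1/2::real)^k)"
      by (intro summable_mult summable_geometric) simp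
    have sn: "summable (\<lambda>k. norm (xs k))"
      by (rule summable_comparison_test'[OF sg]) (simp add: nxs)
    have sx: "summable xs" by (rule summable_comparison_test'[OF sg]) (simp add: nxs)
    define x where "x = suminf xs"
    have Kxs: "K (xs k) = ys k - ys (Suc k)" for k by (simp add: ysS xs_def)
    have ys_lim: "ys \<longlonglongrightarrow> 0"
    proof -
      have "(\<lambda>k. norm y * (1/2::real)^k) \<longlonglongrightarrow> norm y * 0"
        by (intro tendsto_mult tendsto_const LIMSEQ_power_zero) simp
      then have g0: "(\<lambda>k. norm y * (1/2::real)^k) \<longlonglongrightarrow> 0" by simp
      have ev: "eventually (\<lambda>k. norm (ys k) \<le> norm y * (1/2::real)^k) sequentially"
        using ysR by (intro always_eventually allI) blast
      show ?thesis by (rule Lim_null_comparison[OF ev g0])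
    qed
    have "(\<lambda>k. K (xs k)) sums (ys 0 - 0)" unfolding Kxs by (rule telescope_sums'[OF ys_lim])
    then have "K x = y" unfolding x_def using bounded_linear.suminf[OF bcl_bl[OF K] sx] ys0
      by (simp add: sums_iff)
    moreover have "norm x \<le> (2 * M) * norm y"
    proof -
      have "norm x \<le> (\<Sum>k. norm (xs k))" unfolding x_def by (rule summable_norm[OF sn])
      also have "\<dots> \<le> (\<Sum>k. M * norm y * (1/2::real)^k)" by (rule suminf_le[OF nxs sn sg])
      also have "\<dots> = M * norm y * 2" using suminf_geometric[of "1/2::real"] by (simp add: suminf_mult)
      finally show ?thesis by simp
    qed
    ultimately show ?thesis by blast
  qed
  moreover have "2 * M \<ge> 0" using M0 by simp
  ultimately show ?thesis by blast
qed

lemma null_space_csubspace: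
  assumes K: "bounded_clinear K" shows "csubspace (null_space K)"
  unfolding csubspace_def null_space_def by (simp add: bcl_zero[OF K] bcl_add[OF K] bcl_scaleC[OF K])

lemma null_space_closed:
  assumes K: "bounded_clinear K" shows "closed (null_space K)"
  unfolding null_space_def
  by (rule closed_Collect_eq) (auto intro: linear_continuous_on bcl_bl[OF K] continuous_on_const)

lemma orth_compl_csubspace: "csubspace (orth_compl S)"
  unfolding csubspace_def orth_compl_def by (simp add: cinner_add_left cinner_scaleC_left)

lemma proj_compl_norm:
  fixes V :: "'a::chilbert_space set"
  assumes sub: "csubspace V" and cl: "closed V"
  shows "norm (x - proj V x) \<le> norm x"
proof -
  have "cinner (x - proj V x) (proj V x) = 0" by (rule proj_orth[OF sub cl proj_in[OF sub cl]])
  then have "(norm ((x - proj V x) + proj V x))^2 = (norm (x - proj V x))^2 + (norm (proj V x))^2"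
    by (rule pythagoras)
  then have "(norm (x - proj V x))^2 \<le> (norm x)^2" by simp
  then show ?thesis by (rule power2_le_imp_le) simp
qed

definition mpC :: "('a::chilbert_space \<Rightarrow> 'a) \<Rightarrow> real" where
  "mpC K = (SOME C. C \<ge> 0 \<and> (\<forall>y\<in>range K. \<exists>x. K x = y \<and> norm x \<le> C * norm y))"

definition mpA :: "('a::chilbert_space \<Rightarrow> 'a) \<Rightarrow> 'a \<Rightarrow> 'a" where
  "mpA K y = (let x = (SOME x. K x = proj (range K) y \<and> norm x \<le> mpC K * norm (proj (range K) y))
     in x - proj (null_space K) x)"

context
  fixes K :: "'a::chilbert_space \<Rightarrow> 'a"
  assumes K: "bounded_clinear K" and cl: "closed (range K)"
begin

lemma subR: "csubspace (range K)" by (rule range_csubspace[OF K])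
lemma subN: "csubspace (null_space K)" by (rule null_space_csubspace[OF K])
lemma clN: "closed (null_space K)" by (rule null_space_closed[OF K])

lemma mpC: "mpC K \<ge> 0 \<and> (\<forall>y\<in>range K. \<exists>x. K x = y \<and> norm x \<le> mpC K * norm y)"
  unfolding mpC_def by (rule someI_ex[OF open_mapping[OF K cl]])

lemma mp_pre: "K (SOME x. K x = proj (range K) y \<and> norm x \<le> mpC K * norm (proj (range K) y)) = proj (range K) y
  \<and> norm (SOME x. K x = proj (range K) y \<and> norm x \<le> mpC K * norm (proj (range K) y)) \<le> mpC K * norm (proj (range K) y)"
proof (rule someI_ex)
  have "proj (range K) y \<in> range K" by (rule proj_in[OF subR cl])
  then show "\<exists>x. K x = proj (range K) y \<and> norm x \<le> mpC K * norm (proj (range K) y)" using mpC by blast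
qed

lemma mpA_orth: "mpA K y \<in> orth_compl (null_space K)"
  unfolding mpA_def Let_def orth_compl_def using proj_orth[OF subN clN] by blast

lemma mpA_K: "K (mpA K y) = proj (range K) y"
proof -
  define x where "x = (SOME x. K x = proj (range K) y \<and> norm x \<le> mpC K * norm (proj (range K) y))"
  have "proj (null_space K) x \<in> null_space K" by (rule proj_in[OF subN clN])
  then have "K (proj (null_space K) x) = 0" by (simp add: null_space_def)
  then show ?thesis using mp_pre[of y] unfolding mpA_def Let_def x_def[symmetric] by (simp add: bcl_diff[OF K])
qed

lemma mpA_norm: "norm (mpA K y) \<le> norm y * mpC K"
proof -
  define x where "x = (SOME x. K x = proj (range K) y \<and> norm x \<le> mpC K * norm (proj (range K) y))"
  have "norm (mpA K y) = norm (x - proj (null_space K) x)" unfolding mpA_def Let_def x_def ..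
  also have "\<dots> \<le> norm x" by (rule proj_compl_norm[OF subN clN])
  also have "\<dots> \<le> mpC K * norm (proj (range K) y)" using mp_pre[of y] unfolding x_def by blast
  also have "\<dots> \<le> mpC K * norm y" using mpC proj_norm[OF subR cl] by (intro mult_left_mono) auto
  finally show ?thesis by (simp add: mult.commute)
qed

lemma mpA_uniq:
  assumes u: "u \<in> orth_compl (null_space K)" "K u = proj (range K) y"
  shows "mpA K y = u"
proof -
  define w where "w = u - mpA K y"
  have "K w = 0" unfolding w_def using u mpA_K by (simp add: bcl_diff[OF K])
  then have wN: "w \<in> null_space K" by (simp add: null_space_def)
  have "w \<in> orth_compl (null_space K)" unfolding w_def
    by (rule csubspace_diff[OF orth_compl_csubspace u(1) mpA_orth])
  then have "cinner w w = 0" using wN by (simp add: orth_compl_def)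
  then have "w = 0" using cinner_eq_zero_iff by blast
  then show ?thesis by (simp add: w_def)
qed

lemma mpA_add: "mpA K (x + y) = mpA K x + mpA K y"
proof (rule mpA_uniq)
  show "mpA K x + mpA K y \<in> orth_compl (null_space K)"
    by (rule csubspace_add[OF orth_compl_csubspace mpA_orth mpA_orth])
  show "K (mpA K x + mpA K y) = proj (range K) (x + y)"
    by (simp add: bcl_add[OF K] mpA_K proj_add[OF subR cl])
qed

lemma mpA_scaleC: "mpA K (c *\<^sub>C x) = c *\<^sub>C mpA K x"
proof (rule mpA_uniq)
  show "c *\<^sub>C mpA K x \<in> orth_compl (null_space K)"
    by (rule csubspace_scaleC[OF orth_compl_csubspace mpA_orth])
  show "K (c *\<^sub>C mpA K x) = proj (range K) (c *\<^sub>C x)"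
    by (simp add: bcl_scaleC[OF K] mpA_K proj_scaleC[OF subR cl])
qed

lemma mpA_bcl: "bounded_clinear (mpA K)"
  by (rule clinear_bounded_linear[where B="mpC K"]) (auto simp: mpA_add mpA_scaleC mpA_norm)

lemma mpA_KAK: "K (mpA K (K z)) = K z"
  by (simp add: mpA_K proj_id[OF subR cl])

lemma mpA_AK: "mpA K (K z) = z - proj (null_space K) z"
proof (rule mpA_uniq)
  show "z - proj (null_space K) z \<in> orth_compl (null_space K)"
    unfolding orth_compl_def using proj_orth[OF subN clN] by blast
  have "proj (null_space K) z \<in> null_space K" by (rule proj_in[OF subN clN])
  then have "K (proj (null_space K) z) = 0" by (simp add: null_space_def)
  then show "K (z - proj (null_space K) z) = proj (range K) (K z)"
    by (simp add: bcl_diff[OF K] proj_id[OF subR cl])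
qed

lemma mpA_AKA: "mpA K (K (mpA K y)) = mpA K y"
proof -
  have "mpA K (proj (range K) y) = mpA K y"
    by (rule mpA_uniq[OF mpA_orth]) (simp add: mpA_K proj_idem[OF subR cl])
  then show ?thesis by (simp add: mpA_K)
qed

lemma adj_KA: "adjoint (K \<circ> mpA K) = K \<circ> mpA K"
  by (rule adjoint_eqI) (simp add: mpA_K proj_sa[OF subR cl])

lemma adj_AK: "adjoint (mpA K \<circ> K) = mpA K \<circ> K"
  by (rule adjoint_eqI) (simp add: mpA_AK cinner_diff_left cinner_diff_right proj_sa[OF subN clN])

lemma pinv_eq: "pseudo_inverse K = mpA K"
  unfolding pseudo_inverse_def
proof (rule the_equality)
  show "bounded_clinear (mpA K) \<and> K \<circ> mpA K \<circ> K = K \<and> mpA K \<circ> K \<circ> mpA K = mpA K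
      \<and> adjoint (K \<circ> mpA K) = K \<circ> mpA K \<and> adjoint (mpA K \<circ> K) = mpA K \<circ> K"
    by (auto simp: mpA_bcl adj_KA adj_AK fun_eq_iff mpA_KAK mpA_AKA)
next
  fix B assume "bounded_clinear B \<and> K \<circ> B \<circ> K = K \<and> B \<circ> K \<circ> B = B
      \<and> adjoint (K \<circ> B) = K \<circ> B \<and> adjoint (B \<circ> K) = B \<circ> K"
  then have B: "bounded_clinear B" and KBK: "\<And>z. K (B (K z)) = K z" and BKB: "\<And>z. B (K (B z)) = B z"
    and a1: "adjoint (K \<circ> B) = K \<circ> B" and a2: "adjoint (B \<circ> K) = B \<circ> K"
    by (auto simp: fun_eq_iff)
  have sa1: "cinner (K (B x)) y = cinner x (K (B y))" for x y
    using adjoint_prop[OF bcl_comp[OF K B], of x y] a1 by simp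
  have sa2: "cinner (B (K x)) y = cinner x (B (K y))" for x y
    using adjoint_prop[OF bcl_comp[OF B K], of x y] a2 by simp
  have KB: "K (B x) = proj (range K) x" for x
  proof (rule sym, rule proj_eqI[OF subR cl])
    show "K (B x) \<in> range K" by simp
    fix v assume "v \<in> range K"
    then obtain w where v: "v = K w" by blast
    have "cinner (x - K (B x)) (K w) = cinner (x - K (B x)) (K (B (K w)))" by (simp add: KBK)
    also have "\<dots> = cinner (K (B (x - K (B x)))) (K w)" by (simp add: sa1)
    also have "\<dots> = 0" by (simp add: bcl_diff[OF K] bcl_diff[OF B] KBK)
    finally show "cinner (x - K (B x)) v = 0" by (simp add: v)
  qed
  have BK: "B (K x) = x - proj (null_space K) x" for x
  proof -
    have "proj (null_space K) x = x - B (K x)"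
    proof (rule proj_eqI[OF subN clN])
      show "x - B (K x) \<in> null_space K" by (simp add: null_space_def bcl_diff[OF K] KBK)
      fix v assume "v \<in> null_space K"
      then have "K v = 0" by (simp add: null_space_def)
      then have "cinner (B (K x)) v = 0" by (simp add: sa2 bcl_zero[OF B])
      then show "cinner (x - (x - B (K x))) v = 0" by simp
    qed
    then show ?thesis by simp
  qed
  show "B = mpA K"
  proof
    fix y
    have "B y = B (K (B y))" by (simp add: BKB)
    also have "\<dots> = mpA K (K (B y))" by (simp add: BK mpA_AK)
    also have "K (B y) = K (mpA K y)" by (simp add: KB mpA_K)
    also have "mpA K (K (mpA K y)) = mpA K y" by (rule mpA_AKA)
    finally show "B y = mpA K y" .
  qed
qed

end

lemma frame_transfer:
  fixes M :: "'b measure" and K :: "'a::chilbert_space \<Rightarrow> 'a" and F :: "'b \<Rightarrow> 'a"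
  assumes fr: "parseval_cont_L_frame M K F" and T: "bounded_clinear T"
  shows "(\<lambda>\<omega>. cinner f (T (F \<omega>))) \<in> borel_measurable M"
    and "(\<integral>\<^sup>+\<omega>. ennreal ((cmod (cinner f (T (F \<omega>))))\<^sup>2) \<partial>M) = ennreal ((norm (adjoint K (adjoint T f)))\<^sup>2)"
proof -
  have eq: "(\<lambda>\<omega>. cinner f (T (F \<omega>))) = (\<lambda>\<omega>. cinner (adjoint T f) (F \<omega>))"
    by (simp add: adjoint_prop'[OF T])
  from fr have wm: "weakly_measurable M F"
    and pars: "\<And>g. (\<integral>\<^sup>+\<omega>. ennreal ((cmod (cinner g (F \<omega>)))\<^sup>2) \<partial>M) = ennreal ((norm (adjoint K g))\<^sup>2)"
    by (auto simp: parseval_cont_L_frame_def)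
  show "(\<lambda>\<omega>. cinner f (T (F \<omega>))) \<in> borel_measurable M"
    unfolding eq using wm by (simp add: weakly_measurable_def)
  show "(\<integral>\<^sup>+\<omega>. ennreal ((cmod (cinner f (T (F \<omega>))))\<^sup>2) \<partial>M) = ennreal ((norm (adjoint K (adjoint T f)))\<^sup>2)"
    using pars[of "adjoint T f"] eq by (metis (no_types))
qed

theorem lemma3p5:
  fixes M :: "'b measure"
    and K :: "'a::chilbert_space \<Rightarrow> 'a"
    and F :: "'b \<Rightarrow> 'a"
  assumes "separable_space TYPE('a)"
    and "bounded_clinear K"
    and "closed (range K)"
    and "parseval_cont_L_frame M K F"
  shows "parseval_cont_frame_on M (orth_compl (null_space K)) (\<lambda>\<omega>. pseudo_inverse K (F \<omega>))
    \<and> parseval_cont_L_frame M (pseudo_inverse K \<circ> K) (\<lambda>\<omega>. pseudo_inverse K (F \<omega>))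
    \<and> parseval_cont_L_frame M K (\<lambda>\<omega>. K (pseudo_inverse K (F \<omega>)))"
proof -
  note K = assms(2) and cl = assms(3) and fr = assms(4)
  define A where "A = pseudo_inverse K"
  have A_eq: "A = mpA K" unfolding A_def by (rule pinv_eq[OF K cl])
  have A: "bounded_clinear A" unfolding A_eq by (rule mpA_bcl[OF K cl])
  have AK: "A (K z) = z - proj (null_space K) z" for z unfolding A_eq by (rule mpA_AK[OF K cl])
  have KAK: "K (A (K z)) = K z" for z unfolding A_eq by (rule mpA_KAK[OF K cl])
  have Aorth: "A y \<in> orth_compl (null_space K)" for y unfolding A_eq by (rule mpA_orth[OF K cl])
  have KA: "bounded_clinear (K \<circ> A)" by (rule bcl_comp[OF K A])
  have wmA: "weakly_measurable M (\<lambda>\<omega>. A (F \<omega>))"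
    unfolding weakly_measurable_def using frame_transfer(1)[OF fr A] by blast
  have wmKA: "weakly_measurable M (\<lambda>\<omega>. K (A (F \<omega>)))"
    unfolding weakly_measurable_def using frame_transfer(1)[OF fr KA] by (simp add: o_def)
  have P1: "parseval_cont_frame_on M (orth_compl (null_space K)) (\<lambda>\<omega>. A (F \<omega>))"
    unfolding parseval_cont_frame_on_def
  proof (intro conjI ballI allI)
    show "A (F \<omega>) \<in> orth_compl (null_space K)" for \<omega> by (rule Aorth)
    show "(\<lambda>\<omega>. cinner f (A (F \<omega>))) \<in> borel_measurable M" for f by (rule frame_transfer(1)[OF fr A])
    fix f assume f: "f \<in> orth_compl (null_space K)"
    have "adjoint K (adjoint A f) = f"
    proof (rule cinner_ext_right)
      fix x
      have "cinner x (adjoint K (adjoint A f)) = cinner (K x) (adjoint A f)" by (simp add: adjoint_prop[OF K])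
      also have "\<dots> = cinner (A (K x)) f" by (simp add: adjoint_prop[OF A])
      also have "\<dots> = cinner x f - cinner (proj (null_space K) x) f" by (simp add: AK cinner_diff_left)
      also have "cinner (proj (null_space K) x) f = 0"
      proof -
        have "proj (null_space K) x \<in> null_space K" by (rule proj_in[OF subN[OF K cl] clN[OF K cl]])
        then have "cinner f (proj (null_space K) x) = 0" using f by (simp add: orth_compl_def)
        then show ?thesis by (subst cinner_commute) simp
      qed
      finally show "cinner x (adjoint K (adjoint A f)) = cinner x f" by simp
    qed
    then show "(\<integral>\<^sup>+\<omega>. ennreal ((cmod (cinner f (A (F \<omega>))))\<^sup>2) \<partial>M) = ennreal ((norm f)\<^sup>2)"
      using frame_transfer(2)[OF fr A, of f] by simp
  qed
  have adjAK: "adjoint (A \<circ> K) = (\<lambda>y. adjoint K (adjoint A y))"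
    by (rule adjoint_eqI) (simp add: adjoint_prop[OF A] adjoint_prop[OF K])
  have P2: "parseval_cont_L_frame M (A \<circ> K) (\<lambda>\<omega>. A (F \<omega>))"
    unfolding parseval_cont_L_frame_def using wmA frame_transfer(2)[OF fr A] adjAK by simp
  have P3: "parseval_cont_L_frame M K (\<lambda>\<omega>. K (A (F \<omega>)))"
    unfolding parseval_cont_L_frame_def
  proof (intro conjI allI wmKA)
    fix f
    have "adjoint K (adjoint (K \<circ> A) f) = adjoint K f"
    proof (rule cinner_ext_right)
      fix x
      have "cinner x (adjoint K (adjoint (K \<circ> A) f)) = cinner (K x) (adjoint (K \<circ> A) f)"
        by (simp add: adjoint_prop[OF K])
      also have "\<dots> = cinner (K (A (K x))) f" using adjoint_prop[OF KA, of "K x" f] by simp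
      also have "\<dots> = cinner x (adjoint K f)" by (simp add: KAK adjoint_prop[OF K])
      finally show "cinner x (adjoint K (adjoint (K \<circ> A) f)) = cinner x (adjoint K f)" .
    qed
    then show "(\<integral>\<^sup>+\<omega>. ennreal ((cmod (cinner f (K (A (F \<omega>)))))\<^sup>2) \<partial>M) = ennreal ((norm (adjoint K f))\<^sup>2)"
      using frame_transfer(2)[OF fr KA, of f] by (simp add: o_def)
  qed
  show ?thesis using P1 P2 P3 unfolding A_def by blast
qed

end
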